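(* Let $0<\alpha\le 1/\sqrt2$ and let $X:[-1,1]^2\to\{0,1\}$ be $X(s,t) = \mathbf{1}\{|s\cos\nu+t\sin\nu|\le\alpha,\ |-s\sin\nu+t\cos\nu|\le\alpha\}$ with $\nu=\pi/4$, and let $\mathcal{T}_X:L^2([-1,1])\to L^2([-1,1])$, $\mathcal{T}_X[f](s) = \int_{-1}^1 X(s,t)f(t)\,dt$. Define $$\lambda_k = (-1)^{k-1}\frac{4\sqrt2\,\alpha}{\pi(2k-1)},\qquad g_k(s) = \begin{cases}\frac{1}{\sqrt{\alpha\sqrt2}}\cos\!\Big(\frac{\pi}{2\sqrt2\alpha}(2k-1)s\Big) & |s|\le\sqrt2\alpha\\ 0&\text{otherwise}\end{cases}$$ for $k=1,2,\dots$ and $s\in[-1,1]$. Then the functions $g_k$ form an orthonormal basis for the range of the (compact, self-adjoint) operator $\mathcal{T}_X$, and $$\mathcal{T}_X = \sum_{k\in\mathbb{N}}\lambda_k\, g_k g_k^*,$$ where $g_kg_k^*$ is the operator $h\mapsto g_k\langle g_k,h\rangle_{L^2}$.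
   Context: $X$ is the indicator of the square $[-\alpha,\alpha]^2$ rotated by $\pi/4$ (a diamond $\{|s+t|\le\sqrt2\alpha,\ |t-s|\le\sqrt2\alpha\}$). *)

theory Defs
  imports "HOL-Analysis.Analysis"
begin

abbreviation I11 :: "real measure" where "I11 \<equiv> lebesgue_on {-1..1}"

text \<open>Square-integrable (real-valued) functions on [-1,1]; elements of L2 are represented
  by functions, equality in L2 being equality almost everywhere.\<close>
definition L2 :: "(real \<Rightarrow> real) \<Rightarrow> bool" where
  "L2 f \<longleftrightarrow> f \<in> borel_measurable I11 \<and> integrable I11 (\<lambda>t. (f t)\<^sup>2)"

definition l2_inner :: "(real \<Rightarrow> real) \<Rightarrow> (real \<Rightarrow> real) \<Rightarrow> real" where
  "l2_inner f g = (\<integral>t. f t * g t \<partial>I11)"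

definition l2_norm :: "(real \<Rightarrow> real) \<Rightarrow> real" where
  "l2_norm f = sqrt (l2_inner f f)"

definition Xker :: "real \<Rightarrow> real \<Rightarrow> real \<Rightarrow> real" where
  "Xker \<alpha> s t = (let \<nu> = pi / 4 in
     if \<bar>s * cos \<nu> + t * sin \<nu>\<bar> \<le> \<alpha> \<and> \<bar>- s * sin \<nu> + t * cos \<nu>\<bar> \<le> \<alpha> then 1 else 0)"

definition TX :: "real \<Rightarrow> (real \<Rightarrow> real) \<Rightarrow> real \<Rightarrow> real" where
  "TX \<alpha> f s = (\<integral>t. Xker \<alpha> s t * f t \<partial>I11)"

definition lam :: "real \<Rightarrow> nat \<Rightarrow> real" where
  "lam \<alpha> k = (-1) ^ (k - 1) * (4 * sqrt 2 * \<alpha>) / (pi * (2 * real k - 1))"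

definition gk :: "real \<Rightarrow> nat \<Rightarrow> real \<Rightarrow> real" where
  "gk \<alpha> k s = (if \<bar>s\<bar> \<le> sqrt 2 * \<alpha>
     then 1 / sqrt (\<alpha> * sqrt 2) * cos (pi / (2 * sqrt 2 * \<alpha>) * (2 * real k - 1) * s)
     else 0)"

end

theory Submission
  imports Defs
begin
lemma m1[measurable]: "(\<lambda>t::real. t) \<in> borel_measurable I11"
  by (rule continuous_imp_measurable_on_sets_lebesgue) (auto intro: continuous_intros)
lemma fm: "finite_measure I11" by (rule finite_measure_lebesgue_on) auto
lemma sf: "sigma_finite_measure I11" using fm finite_measure.axioms(1) by blast

lemma abs_scale_le: assumes "(c::real) > 0" shows "\<bar>x * c\<bar> \<le> \<alpha> \<longleftrightarrow> \<bar>x\<bar> \<le> \<alpha> / c"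
  using assms by (simp add: abs_mult pos_le_divide_eq)

lemma Xker_eq: "Xker \<alpha> s t = (if \<bar>s\<bar> + \<bar>t\<bar> \<le> sqrt 2 * \<alpha> then 1 else 0)"
proof -
  define c :: real where "c = sqrt 2 / 2"
  have cpos: "c > 0" unfolding c_def by simp
  have ac: "\<alpha> / c = sqrt 2 * \<alpha>" unfolding c_def
    by (simp add: field_simps)
  have c: "cos (pi/4) = c" "sin (pi/4) = c" by (simp_all add: cos_45 sin_45 c_def)
  have e1: "\<bar>s * c + t * c\<bar> \<le> \<alpha> \<longleftrightarrow> \<bar>s + t\<bar> \<le> sqrt 2 * \<alpha>"
    using abs_scale_le[OF cpos, of "s+t" \<alpha>] ac by (simp add: algebra_simps)
  have e2: "\<bar>- s * c + t * c\<bar> \<le> \<alpha> \<longleftrightarrow> \<bar>t - s\<bar> \<le> sqrt 2 * \<alpha>"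
    using abs_scale_le[OF cpos, of "t-s" \<alpha>] ac by (simp add: algebra_simps)
  have "(\<bar>s + t\<bar> \<le> sqrt 2 * \<alpha> \<and> \<bar>t - s\<bar> \<le> sqrt 2 * \<alpha>) \<longleftrightarrow> \<bar>s\<bar> + \<bar>t\<bar> \<le> sqrt 2 * \<alpha>"
    by (cases "s \<ge> 0"; cases "t \<ge> 0") auto
  then show ?thesis unfolding Xker_def Let_def c e1 e2 by simp
qed

lemma TX_meas: assumes f: "f \<in> borel_measurable I11" shows "(\<lambda>s. TX \<alpha> f s) \<in> borel_measurable I11"
proof -
  have [measurable]: "(\<lambda>p. snd p) \<in> borel_measurable (I11 \<Otimes>\<^sub>M I11)" 
    by (rule measurable_compose[OF measurable_snd m1])
  have [measurable]: "(\<lambda>p. fst p) \<in> borel_measurable (I11 \<Otimes>\<^sub>M I11)" 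
    by (rule measurable_compose[OF measurable_fst m1])
  have [measurable]: "(\<lambda>p. f (snd p)) \<in> borel_measurable (I11 \<Otimes>\<^sub>M I11)" 
    by (rule measurable_compose[OF measurable_snd f])
  show ?thesis
  unfolding TX_def Xker_eq
  apply (rule sigma_finite_measure.borel_measurable_lebesgue_integral[OF sf])
  apply (simp add: case_prod_beta')
  apply measurable
  done
qed

lemma meas_cont: "continuous_on {-1..1} h \<Longrightarrow> h \<in> borel_measurable I11"
  by (rule continuous_imp_measurable_on_sets_lebesgue) auto

lemma lift:
  fixes h :: "real \<Rightarrow> real"
  assumes b: "0 \<le> b" "b \<le> 1" and hi: "(h has_integral v) {-b..b}" and hc: "continuous_on UNIV h"
    and F: "\<And>t. F t = (if t \<in> {-b..b} then h t else 0)"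
  shows "integrable I11 F" "(\<integral>t. F t \<partial>I11) = v"
proof -
  have hm[measurable]: "h \<in> borel_measurable I11" by (rule meas_cont) (rule continuous_on_subset[OF hc], auto)
  have Fe: "F = (\<lambda>t. if t \<in> {-b..b} then h t else 0)" using F by auto
  have Fm: "F \<in> borel_measurable I11" unfolding Fe by measurable
  obtain B where B: "\<And>t. t \<in> {-b..b} \<Longrightarrow> norm (h t) \<le> B"
    using compact_imp_bounded[OF compact_continuous_image[OF continuous_on_subset[OF hc] compact_Icc]]
    unfolding bounded_iff by blast
  have "\<And>t. norm (F t) \<le> max B 0" using B unfolding Fe by (auto simp: le_max_iff_disj)
  then show ii: "integrable I11 F"
    by (intro finite_measure.integrable_const_bound[OF fm _ Fm]) auto
  have "(F has_integral v) {-1..1}" unfolding Fe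
    using has_integral_restrict_closed_subinterval[of h v "-b" b "-1" 1] hi b by simp
  then show "(\<integral>t. F t \<partial>I11) = v"
    using lebesgue_integral_eq_integral[OF ii] by (simp add: integral_unique)
qed

definition om :: "real \<Rightarrow> nat \<Rightarrow> real" where "om a k = pi * (2 * real k - 1) / (2 * a)"
definition G :: "real \<Rightarrow> nat \<Rightarrow> real \<Rightarrow> real" where
  "G a k t = (if \<bar>t\<bar> \<le> a then cos (om a k * t) / sqrt a else 0)"
definition K :: "real \<Rightarrow> real \<Rightarrow> real \<Rightarrow> real" where
  "K a s t = (if \<bar>s\<bar> + \<bar>t\<bar> \<le> a then 1 else 0)"
definition Q :: "real \<Rightarrow> real \<Rightarrow> real" where
  "Q a s = (if \<bar>s\<bar> \<le> a then 2 * (a - \<bar>s\<bar>) else 0)"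
definition L :: "real \<Rightarrow> nat \<Rightarrow> real" where
  "L a k = (-1) ^ (k - 1) * 2 / om a k"

lemma gk_G: "\<alpha> > 0 \<Longrightarrow> gk \<alpha> k = G (sqrt 2 * \<alpha>) k"
  unfolding gk_def G_def om_def by (auto simp: fun_eq_iff mult.commute field_simps)

lemma lam_L: "\<alpha> > 0 \<Longrightarrow> lam \<alpha> k = L (sqrt 2 * \<alpha>) k"
  unfolding lam_def L_def om_def by (auto simp: field_simps)

lemma TX_K: "TX \<alpha> f s = (\<integral>t. K (sqrt 2 * \<alpha>) s t * f t \<partial>I11)"
  unfolding TX_def Xker_eq K_def ..

lemma has_int_cos:
  fixes b \<mu> :: real
  assumes "0 \<le> b" "\<mu> \<noteq> 0"
  shows "((\<lambda>t. cos (\<mu> * t)) has_integral 2 * sin (\<mu> * b) / \<mu>) {-b..b}"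
proof -
  have d: "((\<lambda>t. sin (\<mu> * t) / \<mu>) has_real_derivative cos (\<mu> * x)) (at x within {-b..b})" for x
    using assms by (auto intro!: derivative_eq_intros)
  have "((\<lambda>t. cos (\<mu> * t)) has_integral (sin (\<mu> * b) / \<mu> - sin (\<mu> * (-b)) / \<mu>)) {-b..b}"
    using fundamental_theorem_of_calculus[of "-b" b "\<lambda>t. sin (\<mu> * t) / \<mu>" "\<lambda>t. cos (\<mu> * t)"] d assms
    by (simp add: has_real_derivative_iff_has_vector_derivative)
  then show ?thesis by simp
qed

lemma has_int_cos':
  fixes b \<mu> :: real
  assumes "0 \<le> b" "\<mu> * b = pi * of_int m"
  shows "((\<lambda>t. cos (\<mu> * t)) has_integral (if \<mu> = 0 then 2 * b else 0)) {-b..b}"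
proof (cases "\<mu> = 0")
  case True
  have "((\<lambda>t. 1) has_integral 2*b) {-b..b}" using has_integral_const_real[of "1::real" "-b" b] assms(1) by simp
  then show ?thesis using True by simp
next
  case False
  then show ?thesis using has_int_cos[OF assms(1) False] assms(2) by simp
qed

lemma om_a: "0 < a \<Longrightarrow> om a k * a = pi * (2 * real k - 1) / 2"
  unfolding om_def by (simp add: field_simps)

lemma om_pos: "0 < a \<Longrightarrow> k \<ge> 1 \<Longrightarrow> om a k > 0"
  unfolding om_def by (auto intro!: divide_pos_pos mult_pos_pos)

lemma sin_om: assumes "0 < a" "k \<ge> 1" shows "sin (om a k * a) = (-1) ^ (k - 1)" "cos (om a k * a) = 0"
proof -
  have e: "om a k * a = real (k - 1) * pi + pi / 2" 
    by (subst om_a[OF assms(1)]) (use assms in \<open>simp add: of_nat_diff field_simps\<close>)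
  show "sin (om a k * a) = (-1) ^ (k - 1)" unfolding e sin_add by simp
  show "cos (om a k * a) = 0" unfolding e cos_add by simp
qed


lemma GK:
  assumes a: "0 < a" "a \<le> 1" and k: "k \<ge> 1"
  shows "integrable I11 (\<lambda>t. G a k t * K a s t)" "(\<integral>t. G a k t * K a s t \<partial>I11) = L a k * G a k s"
proof -
  have "integrable I11 (\<lambda>t. G a k t * K a s t) \<and> (\<integral>t. G a k t * K a s t \<partial>I11) = L a k * G a k s"
  proof (cases "\<bar>s\<bar> \<le> a")
    case True
    define b where "b = a - \<bar>s\<bar>"
    have b: "0 \<le> b" "b \<le> 1" using True a unfolding b_def by auto
    have om: "om a k \<noteq> 0" using om_pos[OF a(1) k] by simp
    have hi: "((\<lambda>t. cos (om a k * t) / sqrt a) has_integral (2 * sin (om a k * b) / om a k) / sqrt a) {-b..b}"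
      by (rule has_integral_divide, rule has_int_cos[OF b(1) om])
    have F: "G a k t * K a s t = (if t \<in> {-b..b} then cos (om a k * t) / sqrt a else 0)" for t
      unfolding G_def K_def b_def using True by auto
    have hc: "continuous_on UNIV (\<lambda>t. cos (om a k * t) / sqrt a)" using a by (intro continuous_intros) auto
    note l = lift[OF b hi hc F]
    have "sin (om a k * b) = (-1)^(k-1) * cos (om a k * s)"
    proof -
      have "sin (om a k * b) = sin (om a k * a - om a k * \<bar>s\<bar>)" unfolding b_def by (simp add: algebra_simps)
      also have "\<dots> = (-1)^(k-1) * cos (om a k * \<bar>s\<bar>)" unfolding sin_diff sin_om[OF a(1) k] by simp
      also have "cos (om a k * \<bar>s\<bar>) = cos (om a k * s)"
        by (cases "s \<ge> 0") (auto simp: abs_if)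
      finally show ?thesis .
    qed
    then have "(2 * sin (om a k * b) / om a k) / sqrt a = L a k * G a k s"
      unfolding L_def G_def using True by simp
    then show ?thesis using l by simp
  next
    case False
    have z: "(\<lambda>t. G a k t * K a s t) = (\<lambda>t. 0)" unfolding K_def using False by (auto simp: fun_eq_iff)
    show ?thesis unfolding z using False by (simp add: G_def)
  qed
  then show "integrable I11 (\<lambda>t. G a k t * K a s t)" "(\<integral>t. G a k t * K a s t \<partial>I11) = L a k * G a k s"
    by auto
qed

lemma KK:
  assumes a: "0 < a" "a \<le> 1"
  shows "integrable I11 (\<lambda>t. (K a s t)\<^sup>2)" "(\<integral>t. (K a s t)\<^sup>2 \<partial>I11) = Q a s"
proof -
  have "integrable I11 (\<lambda>t. (K a s t)\<^sup>2) \<and> (\<integral>t. (K a s t)\<^sup>2 \<partial>I11) = Q a s"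
  proof (cases "\<bar>s\<bar> \<le> a")
    case True
    define b where "b = a - \<bar>s\<bar>"
    have b: "0 \<le> b" "b \<le> 1" using True a unfolding b_def by auto
    have hi: "((\<lambda>t. 1) has_integral 2 * b) {-b..b}"
      using has_integral_const_real[of "1::real" "-b" b] b by simp
    have F: "(K a s t)\<^sup>2 = (if t \<in> {-b..b} then 1 else 0)" for t
      unfolding K_def b_def using True by auto
    note l = lift[OF b hi _ F]
    then show ?thesis using True unfolding Q_def b_def by simp
  next
    case False
    have "(K a s t)\<^sup>2 = 0" for t unfolding K_def using False by auto
    then show ?thesis using False by (simp add: Q_def)
  qed
  then show "integrable I11 (\<lambda>t. (K a s t)\<^sup>2)" "(\<integral>t. (K a s t)\<^sup>2 \<partial>I11) = Q a s" by auto
qed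

lemma QQ:
  assumes a: "0 < a" "a \<le> 1"
  shows "integrable I11 (Q a)" "(\<integral>t. Q a t \<partial>I11) = 2 * a\<^sup>2"
proof -
  have d1: "((\<lambda>t. 2 * a * t + t\<^sup>2) has_real_derivative 2 * (a - \<bar>x\<bar>)) (at x within {-a..0})"
    if "x \<in> {-a..0}" for x
    using that by (auto intro!: derivative_eq_intros)
  have i1: "((\<lambda>t. 2 * (a - \<bar>t\<bar>)) has_integral a\<^sup>2) {-a..0}"
    using fundamental_theorem_of_calculus[of "-a" 0 "\<lambda>t. 2 * a * t + t\<^sup>2" "\<lambda>t. 2 * (a - \<bar>t\<bar>)"] d1 a
    by (simp add: has_real_derivative_iff_has_vector_derivative power2_eq_square)
  have d2: "((\<lambda>t. 2 * a * t - t\<^sup>2) has_real_derivative 2 * (a - \<bar>x\<bar>)) (at x within {0..a})"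
    if "x \<in> {0..a}" for x
    using that by (auto intro!: derivative_eq_intros)
  have i2: "((\<lambda>t. 2 * (a - \<bar>t\<bar>)) has_integral a\<^sup>2) {0..a}"
    using fundamental_theorem_of_calculus[of 0 a "\<lambda>t. 2 * a * t - t\<^sup>2" "\<lambda>t. 2 * (a - \<bar>t\<bar>)"] d2 a
    by (simp add: has_real_derivative_iff_has_vector_derivative power2_eq_square)
  have hi: "((\<lambda>t. 2 * (a - \<bar>t\<bar>)) has_integral 2 * a\<^sup>2) {-a..a}"
    using has_integral_combine[of "-a" 0 a, OF _ _ i1 i2] a by simp
  have hc: "continuous_on UNIV (\<lambda>t. 2 * (a - \<bar>t\<bar>))" by (intro continuous_intros)
  have F: "Q a t = (if t \<in> {-a..a} then 2 * (a - \<bar>t\<bar>) else 0)" for t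
    unfolding Q_def by auto
  note l = lift[OF _ a(2) hi hc F]
  then show "integrable I11 (Q a)" "(\<integral>t. Q a t \<partial>I11) = 2 * a\<^sup>2" using a by auto
qed


lemma GG:
  assumes a: "0 < a" "a \<le> 1" and j: "j \<ge> 1" and k: "k \<ge> 1"
  shows "integrable I11 (\<lambda>t. G a j t * G a k t)" "(\<integral>t. G a j t * G a k t \<partial>I11) = (if j = k then 1 else 0)"
proof -
  define \<mu>1 where "\<mu>1 = om a j - om a k"
  define \<mu>2 where "\<mu>2 = om a j + om a k"
  have m1: "\<mu>1 * a = pi * of_int (int j - int k)" unfolding \<mu>1_def left_diff_distrib om_a[OF a(1)]
    by (simp add: field_simps)
  have m2: "\<mu>2 * a = pi * of_int (int j + int k - 1)" unfolding \<mu>2_def distrib_right om_a[OF a(1)]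
    by (simp add: field_simps)
  have m20: "\<mu>2 \<noteq> 0" using om_pos[OF a(1) j] om_pos[OF a(1) k] unfolding \<mu>2_def by simp
  have m10: "\<mu>1 = 0 \<longleftrightarrow> j = k" unfolding \<mu>1_def om_def using a by (auto simp: field_simps)
  have i1: "((\<lambda>t. cos (\<mu>1 * t)) has_integral (if j = k then 2 * a else 0)) {-a..a}"
    using has_int_cos'[OF _ m1] a m10 by simp
  have i2: "((\<lambda>t. cos (\<mu>2 * t)) has_integral 0) {-a..a}"
    using has_int_cos'[OF _ m2] a m20 by simp
  have hi: "((\<lambda>t. (cos (\<mu>1 * t) + cos (\<mu>2 * t)) / (2 * a)) has_integral (if j = k then 1 else 0)) {-a..a}"
    using has_integral_divide[OF has_integral_add[OF i1 i2], of "2*a"] a by (simp split: if_splits)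
  have hc: "continuous_on UNIV (\<lambda>t. (cos (\<mu>1 * t) + cos (\<mu>2 * t)) / (2 * a))" using a
    by (intro continuous_intros) auto
  have F: "G a j t * G a k t = (if t \<in> {-a..a} then (cos (\<mu>1 * t) + cos (\<mu>2 * t)) / (2 * a) else 0)" for t
  proof -
    have "cos (om a j * t) / sqrt a * (cos (om a k * t) / sqrt a) = (cos (\<mu>1 * t) + cos (\<mu>2 * t)) / (2 * a)"
      unfolding \<mu>1_def \<mu>2_def using a
      by (simp add: cos_times_cos left_diff_distrib distrib_right)
    then show ?thesis unfolding G_def by auto
  qed
  note l = lift[OF _ a(2) hi hc F]
  then show "integrable I11 (\<lambda>t. G a j t * G a k t)" "(\<integral>t. G a j t * G a k t \<partial>I11) = (if j = k then 1 else 0)"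
    using a by auto
qed


lemma abs_mult_le_sq: "\<bar>x * y\<bar> \<le> x\<^sup>2 + (y::real)\<^sup>2"
proof -
  have "0 \<le> (\<bar>x\<bar> - \<bar>y\<bar>)\<^sup>2" by simp
  also have "(\<bar>x\<bar> - \<bar>y\<bar>)\<^sup>2 = x\<^sup>2 + y\<^sup>2 - 2 * (\<bar>x\<bar> * \<bar>y\<bar>)"
    by (simp add: power2_diff)
  finally have "2 * (\<bar>x\<bar> * \<bar>y\<bar>) \<le> x\<^sup>2 + y\<^sup>2" by linarith
  moreover have "0 \<le> \<bar>x\<bar> * \<bar>y\<bar>" by simp
  ultimately show ?thesis unfolding abs_mult by linarith
qed

lemma L2_mult:
  assumes "L2 f" "L2 g" shows "integrable I11 (\<lambda>t. f t * g t)"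
proof (rule Bochner_Integration.integrable_bound)
  show "integrable I11 (\<lambda>t. (f t)\<^sup>2 + (g t)\<^sup>2)" using assms unfolding L2_def by auto
  show "(\<lambda>t. f t * g t) \<in> borel_measurable I11" using assms unfolding L2_def by (auto intro: borel_measurable_times)
  show "AE x in I11. norm (f x * g x) \<le> norm ((f x)\<^sup>2 + (g x)\<^sup>2)"
  proof (intro AE_I2)
    fix x
    have "norm ((f x)\<^sup>2 + (g x)\<^sup>2) = (f x)\<^sup>2 + (g x)\<^sup>2" by simp
    then show "norm (f x * g x) \<le> norm ((f x)\<^sup>2 + (g x)\<^sup>2)"
      using abs_mult_le_sq[of "f x" "g x"] by (simp only: real_norm_def)
  qed
qed

lemma L2_add: assumes "L2 f" "L2 g" shows "L2 (\<lambda>t. f t + g t)"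
proof -
  have "integrable I11 (\<lambda>t. (f t)\<^sup>2 + (g t)\<^sup>2 + 2 * (f t * g t))"
    using assms L2_mult[OF assms] unfolding L2_def by auto
  then have "integrable I11 (\<lambda>t. (f t + g t)\<^sup>2)" by (simp add: power2_sum mult.assoc)
  then show ?thesis using assms unfolding L2_def by auto
qed

lemma L2_cmult: assumes "L2 f" shows "L2 (\<lambda>t. c * f t)"
proof -
  have m: "f \<in> borel_measurable I11" and i: "integrable I11 (\<lambda>t. (f t)\<^sup>2)" using assms unfolding L2_def by auto
  have "(\<lambda>t. (c * f t)\<^sup>2) = (\<lambda>t. c\<^sup>2 * (f t)\<^sup>2)" by (simp add: power_mult_distrib)
  moreover have "integrable I11 (\<lambda>t. c\<^sup>2 * (f t)\<^sup>2)" using i by (rule integrable_mult_right)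
  moreover have "(\<lambda>t. c * f t) \<in> borel_measurable I11" using m by (rule borel_measurable_times[OF borel_measurable_const])
  ultimately show ?thesis unfolding L2_def by simp
qed

lemma L2_diff: assumes "L2 f" "L2 g" shows "L2 (\<lambda>t. f t - g t)"
proof -
  have "L2 (\<lambda>t. f t + (-1) * g t)" by (rule L2_add[OF assms(1) L2_cmult[OF assms(2)]])
  then show ?thesis by simp
qed

lemma L2_sum: assumes "\<And>k. k \<in> A \<Longrightarrow> L2 (g k)" shows "L2 (\<lambda>t. \<Sum>k\<in>A. g k t)"
  using assms
proof (induction A rule: infinite_finite_induct)
  case (infinite A) then show ?case by (simp add: L2_def)
next
  case empty then show ?case by (simp add: L2_def)
next
  case (insert x F)
  have "L2 (\<lambda>t. g x t + (\<Sum>k\<in>F. g k t))"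
    by (rule L2_add) (use insert in auto)
  then show ?case using insert(1,2) by simp
qed

lemma L2_bounded: assumes m: "h \<in> borel_measurable I11" and b: "\<And>t. \<bar>h t\<bar> \<le> B" shows "L2 h"
proof -
  have "norm ((h t)\<^sup>2) \<le> B\<^sup>2" for t
  proof -
    have "\<bar>h t\<bar>\<^sup>2 \<le> B\<^sup>2" by (rule power_mono[OF b abs_ge_zero])
    then show ?thesis by simp
  qed
  moreover have "(\<lambda>t. (h t)\<^sup>2) \<in> borel_measurable I11" using m by measurable
  ultimately have "integrable I11 (\<lambda>t. (h t)\<^sup>2)"
    by (intro finite_measure.integrable_const_bound[OF fm, where B="B\<^sup>2"]) (auto intro: AE_I2)
  then show ?thesis unfolding L2_def using m by simp
qed

lemma CS:
  assumes f: "L2 f" and g: "L2 g"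
  shows "(\<integral>t. f t * g t \<partial>I11)\<^sup>2 \<le> (\<integral>t. (f t)\<^sup>2 \<partial>I11) * (\<integral>t. (g t)\<^sup>2 \<partial>I11)"
proof -
  define A where "A = (\<integral>t. (f t)\<^sup>2 \<partial>I11)"
  define B where "B = (\<integral>t. f t * g t \<partial>I11)"
  define C where "C = (\<integral>t. (g t)\<^sup>2 \<partial>I11)"
  have iA: "integrable I11 (\<lambda>t. (f t)\<^sup>2)" and iC: "integrable I11 (\<lambda>t. (g t)\<^sup>2)" using f g unfolding L2_def by auto
  have iB: "integrable I11 (\<lambda>t. f t * g t)" by (rule L2_mult[OF f g])
  have q: "0 \<le> x\<^sup>2 * A - 2 * x * B + C" for x
  proof -
    have "0 \<le> (\<integral>t. (x * f t - g t)\<^sup>2 \<partial>I11)" by simp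
    also have "(\<lambda>t. (x * f t - g t)\<^sup>2) = (\<lambda>t. x\<^sup>2 * (f t)\<^sup>2 - (2 * x) * (f t * g t) + (g t)\<^sup>2)"
      by (auto simp: fun_eq_iff power2_eq_square algebra_simps)
    also have "(\<integral>t. x\<^sup>2 * (f t)\<^sup>2 - (2 * x) * (f t * g t) + (g t)\<^sup>2 \<partial>I11) = x\<^sup>2 * A - 2 * x * B + C"
      unfolding A_def B_def C_def using iA iB iC by simp
    finally show ?thesis .
  qed
  have A0: "A \<ge> 0" unfolding A_def by simp
  show ?thesis
  proof (cases "A = 0")
    case True
    have "B = 0"
    proof (rule ccontr)
      assume "B \<noteq> 0"
      then have "0 \<le> - 2 * ((C + 1) / (2 * B)) * B + C" using q[of "(C+1)/(2*B)"] True by simp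
      then show False using \<open>B \<noteq> 0\<close> by (simp add: field_simps)
    qed
    then show ?thesis using True unfolding A_def B_def C_def by simp
  next
    case False
    then have Ap: "A > 0" using A0 by simp
    have "0 \<le> (B / A)\<^sup>2 * A - 2 * (B / A) * B + C" by (rule q)
    then have "0 \<le> C - B\<^sup>2 / A" using Ap by (simp add: power2_eq_square field_simps)
    then have "B\<^sup>2 \<le> A * C" using Ap by (simp add: field_simps)
    then show ?thesis unfolding A_def B_def C_def .
  qed
qed

lemma expand:
  assumes A: "finite A" and h: "L2 h" and g: "\<And>k. k \<in> A \<Longrightarrow> L2 (g k)"
    and on: "\<And>j k. j \<in> A \<Longrightarrow> k \<in> A \<Longrightarrow> (\<integral>t. g j t * g k t \<partial>I11) = (if j = k then 1 else 0)"
  shows "(\<integral>t. (h t - (\<Sum>k\<in>A. c k * g k t))\<^sup>2 \<partial>I11)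
     = (\<integral>t. (h t)\<^sup>2 \<partial>I11) - 2 * (\<Sum>k\<in>A. c k * (\<integral>t. g k t * h t \<partial>I11)) + (\<Sum>k\<in>A. (c k)\<^sup>2)"
proof -
  have iH: "integrable I11 (\<lambda>t. (h t)\<^sup>2)" using h unfolding L2_def by auto
  have igh: "integrable I11 (\<lambda>t. g k t * h t)" if "k \<in> A" for k using L2_mult[OF g[OF that] h] .
  have igg: "integrable I11 (\<lambda>t. g j t * g k t)" if "j \<in> A" "k \<in> A" for j k using L2_mult[OF g[OF that(1)] g[OF that(2)]] .
  have e: "(h t - (\<Sum>k\<in>A. c k * g k t))\<^sup>2 = (h t)\<^sup>2 - 2 * (\<Sum>k\<in>A. c k * (g k t * h t))
      + (\<Sum>j\<in>A. \<Sum>k\<in>A. c j * c k * (g j t * g k t))" for t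
    by (simp add: power2_eq_square algebra_simps sum_distrib_left sum_distrib_right sum_subtractf)
  have s1: "(\<integral>t. (\<Sum>k\<in>A. c k * (g k t * h t)) \<partial>I11) = (\<Sum>k\<in>A. c k * (\<integral>t. g k t * h t \<partial>I11))"
    using igh by (simp add: integral_sum)
  have s2: "(\<integral>t. (\<Sum>j\<in>A. \<Sum>k\<in>A. c j * c k * (g j t * g k t)) \<partial>I11) = (\<Sum>j\<in>A. \<Sum>k\<in>A. c j * c k * (\<integral>t. g j t * g k t \<partial>I11))"
    using igg by (simp add: integral_sum integrable_sum)
  also have "\<dots> = (\<Sum>j\<in>A. (c j)\<^sup>2)"
  proof (rule sum.cong[OF refl])
    fix j assume j: "j \<in> A"
    have "(\<Sum>k\<in>A. c j * c k * (\<integral>t. g j t * g k t \<partial>I11)) = (\<Sum>k\<in>A. if j = k then c j * c k else 0)"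
      by (rule sum.cong[OF refl]) (simp add: on[OF j])
    also have "\<dots> = (c j)\<^sup>2" using A j by (simp add: power2_eq_square)
    finally show "(\<Sum>k\<in>A. c j * c k * (\<integral>t. g j t * g k t \<partial>I11)) = (c j)\<^sup>2" .
  qed
  finally have s2': "(\<integral>t. (\<Sum>j\<in>A. \<Sum>k\<in>A. c j * c k * (g j t * g k t)) \<partial>I11) = (\<Sum>j\<in>A. (c j)\<^sup>2)" .
  have i1: "integrable I11 (\<lambda>t. (\<Sum>k\<in>A. c k * (g k t * h t)))" using igh by auto
  have i2: "integrable I11 (\<lambda>t. (\<Sum>j\<in>A. \<Sum>k\<in>A. c j * c k * (g j t * g k t)))" using igg by auto
  show ?thesis unfolding e using iH i1 i2 s1 s2' by simp
qed


definition TK :: "real \<Rightarrow> (real \<Rightarrow> real) \<Rightarrow> real \<Rightarrow> real" where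
  "TK a f s = (\<integral>t. K a s t * f t \<partial>I11)"

lemma TK_meas: assumes f: "f \<in> borel_measurable I11" shows "TK a f \<in> borel_measurable I11"
proof -
  have [measurable]: "(\<lambda>p. snd p) \<in> borel_measurable (I11 \<Otimes>\<^sub>M I11)" 
    by (rule measurable_compose[OF measurable_snd m1])
  have [measurable]: "(\<lambda>p. fst p) \<in> borel_measurable (I11 \<Otimes>\<^sub>M I11)" 
    by (rule measurable_compose[OF measurable_fst m1])
  have [measurable]: "(\<lambda>p. f (snd p)) \<in> borel_measurable (I11 \<Otimes>\<^sub>M I11)" 
    by (rule measurable_compose[OF measurable_snd f])
  show ?thesis
  unfolding TK_def K_def
  apply (rule sigma_finite_measure.borel_measurable_lebesgue_integral[OF sf])
  apply (simp add: case_prod_beta')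
  apply measurable
  done
qed

lemma Gm[measurable]: "G a k \<in> borel_measurable I11"
  unfolding G_def by measurable

lemma Km[measurable]: "K a s \<in> borel_measurable I11"
  unfolding K_def by measurable

lemma GL2: assumes "0 < a" shows "L2 (G a k)"
proof (rule L2_bounded[OF Gm])
  fix t show "\<bar>G a k t\<bar> \<le> 1 / sqrt a"
    unfolding G_def using assms by (auto simp: abs_cos_le_one divide_right_mono)
qed

lemma KL2: "L2 (K a s)"
  by (rule L2_bounded[OF Km, of _ _ 1]) (simp add: K_def)

lemma BND:
  assumes a: "0 < a" "a \<le> 1" and f: "L2 f"
  shows "(TK a f s - (\<Sum>k=1..n. L a k * (\<integral>t. G a k t * f t \<partial>I11) * G a k s))\<^sup>2
      \<le> (Q a s - (\<Sum>k=1..n. (L a k * G a k s)\<^sup>2)) * (\<integral>t. (f t)\<^sup>2 \<partial>I11)"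
    "0 \<le> Q a s - (\<Sum>k=1..n. (L a k * G a k s)\<^sup>2)"
proof -
  define c where "c k = L a k * G a k s" for k
  define R where "R t = K a s t - (\<Sum>k=1..n. c k * G a k t)" for t
  have RL2: "L2 R" unfolding R_def
    by (intro L2_diff KL2 L2_sum L2_cmult GL2 a)
  have iKf: "integrable I11 (\<lambda>t. K a s t * f t)" by (rule L2_mult[OF KL2 f])
  have iGf: "integrable I11 (\<lambda>t. G a k t * f t)" for k by (rule L2_mult[OF GL2[OF a(1)] f])
  have "(\<lambda>t. R t * f t) = (\<lambda>t. K a s t * f t - (\<Sum>k=1..n. c k * (G a k t * f t)))"
    by (auto simp: R_def fun_eq_iff left_diff_distrib sum_distrib_right mult.assoc)
  then have e1: "(\<integral>t. R t * f t \<partial>I11) = TK a f s - (\<Sum>k=1..n. c k * (\<integral>t. G a k t * f t \<partial>I11))"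
    using iKf iGf by (simp add: TK_def integral_sum)
  have e2: "(\<Sum>k=1..n. L a k * (\<integral>t. G a k t * f t \<partial>I11) * G a k s) = (\<Sum>k=1..n. c k * (\<integral>t. G a k t * f t \<partial>I11))"
    by (rule sum.cong) (auto simp: c_def mult.commute mult.left_commute)
  have CSR: "(\<integral>t. R t * f t \<partial>I11)\<^sup>2 \<le> (\<integral>t. (R t)\<^sup>2 \<partial>I11) * (\<integral>t. (f t)\<^sup>2 \<partial>I11)"
    by (rule CS[OF RL2 f])
  have ex: "(\<integral>t. (K a s t - (\<Sum>k\<in>{1..n}. c k * G a k t))\<^sup>2 \<partial>I11)
     = (\<integral>t. (K a s t)\<^sup>2 \<partial>I11) - 2 * (\<Sum>k\<in>{1..n}. c k * (\<integral>t. G a k t * K a s t \<partial>I11)) + (\<Sum>k\<in>{1..n}. (c k)\<^sup>2)"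
  proof (rule expand)
    fix j k assume "j \<in> {1..n}" "k \<in> {1..n}"
    then show "(\<integral>t. G a j t * G a k t \<partial>I11) = (if j = k then 1 else 0)"
      using GG(2)[OF a, of j k] by simp
  qed (auto intro: KL2 GL2 a)
  have sf: "(\<Sum>k\<in>{1..n}. c k * (\<integral>t. G a k t * K a s t \<partial>I11)) = (\<Sum>k\<in>{1..n}. (c k)\<^sup>2)"
    by (rule sum.cong) (auto simp: GK[OF a] c_def power2_eq_square)
  have "(\<integral>t. (R t)\<^sup>2 \<partial>I11) = (\<integral>t. (K a s t - (\<Sum>k\<in>{1..n}. c k * G a k t))\<^sup>2 \<partial>I11)"
    unfolding R_def ..
  also have "\<dots> = Q a s - 2 * (\<Sum>k\<in>{1..n}. (c k)\<^sup>2) + (\<Sum>k\<in>{1..n}. (c k)\<^sup>2)"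
    unfolding ex KK(2)[OF a] sf ..
  finally have eR: "(\<integral>t. (R t)\<^sup>2 \<partial>I11) = Q a s - (\<Sum>k=1..n. (c k)\<^sup>2)" by simp
  have "0 \<le> (\<integral>t. (R t)\<^sup>2 \<partial>I11)" by simp
  then show "0 \<le> Q a s - (\<Sum>k=1..n. (L a k * G a k s)\<^sup>2)"
    unfolding eR c_def .
  show "(TK a f s - (\<Sum>k=1..n. L a k * (\<integral>t. G a k t * f t \<partial>I11) * G a k s))\<^sup>2
      \<le> (Q a s - (\<Sum>k=1..n. (L a k * G a k s)\<^sup>2)) * (\<integral>t. (f t)\<^sup>2 \<partial>I11)"
  proof -
    have X: "TK a f s - (\<Sum>k=1..n. L a k * (\<integral>t. G a k t * f t \<partial>I11) * G a k s) = (\<integral>t. R t * f t \<partial>I11)"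
      unfolding e2 e1 ..
    have Y: "Q a s - (\<Sum>k=1..n. (L a k * G a k s)\<^sup>2) = (\<integral>t. (R t)\<^sup>2 \<partial>I11)"
      unfolding eR c_def ..
    show ?thesis unfolding X Y by (rule CSR)
  qed
qed


lemma key:
  assumes a: "0 < a" "a \<le> 1" and f: "L2 f"
  shows "L2 (\<lambda>s. TK a f s - (\<Sum>k=1..n. L a k * (\<integral>t. G a k t * f t \<partial>I11) * G a k s))"
    "(\<integral>s. (TK a f s - (\<Sum>k=1..n. L a k * (\<integral>t. G a k t * f t \<partial>I11) * G a k s))\<^sup>2 \<partial>I11)
      \<le> (2 * a\<^sup>2 - (\<Sum>k=1..n. (L a k)\<^sup>2)) * (\<integral>t. (f t)\<^sup>2 \<partial>I11)"
proof -
  define D where "D s = TK a f s - (\<Sum>k=1..n. L a k * (\<integral>t. G a k t * f t \<partial>I11) * G a k s)" for s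
  define P where "P s = Q a s - (\<Sum>k=1..n. (L a k * G a k s)\<^sup>2)" for s
  define C where "C = (\<integral>t. (f t)\<^sup>2 \<partial>I11)"
  have C0: "C \<ge> 0" unfolding C_def by simp
  have fm: "f \<in> borel_measurable I11" using f unfolding L2_def by simp
  have [measurable]: "TK a f \<in> borel_measurable I11" by (rule TK_meas[OF fm])
  have Dm: "D \<in> borel_measurable I11" unfolding D_def by measurable
  have Pe: "P s = Q a s - (\<Sum>k=1..n. (L a k)\<^sup>2 * (G a k s * G a k s))" for s
    unfolding P_def by (simp add: power2_eq_square mult.commute mult.left_commute)
  have iGG: "integrable I11 (\<lambda>s. G a k s * G a k s)" for k by (rule L2_mult[OF GL2[OF a(1)] GL2[OF a(1)]])
  have iP: "integrable I11 P" unfolding Pe using QQ(1)[OF a] iGG by auto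
  have intP: "(\<integral>s. P s \<partial>I11) = 2 * a\<^sup>2 - (\<Sum>k=1..n. (L a k)\<^sup>2)"
  proof -
    have "(\<integral>s. P s \<partial>I11) = (\<integral>s. Q a s \<partial>I11) - (\<Sum>k=1..n. (L a k)\<^sup>2 * (\<integral>s. G a k s * G a k s \<partial>I11))"
      unfolding Pe using QQ(1)[OF a] iGG by (simp add: integral_sum)
    also have "\<dots> = 2 * a\<^sup>2 - (\<Sum>k=1..n. (L a k)\<^sup>2)"
      using QQ(2)[OF a] GG(2)[OF a] by simp
    finally show ?thesis .
  qed
  have b1: "(D s)\<^sup>2 \<le> P s * C" for s unfolding D_def P_def C_def by (rule BND(1)[OF a f])
  have b2: "0 \<le> P s" for s unfolding P_def by (rule BND(2)[OF a f])
  have iD: "integrable I11 (\<lambda>s. (D s)\<^sup>2)"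
  proof (rule Bochner_Integration.integrable_bound)
    show "integrable I11 (\<lambda>s. P s * C)" using iP by simp
    show "(\<lambda>s. (D s)\<^sup>2) \<in> borel_measurable I11" using Dm by measurable
    show "AE s in I11. norm ((D s)\<^sup>2) \<le> norm (P s * C)"
      using b1 b2 C0 by (intro AE_I2) simp
  qed
  show "L2 D" unfolding L2_def using Dm iD by simp
  have "(\<integral>s. (D s)\<^sup>2 \<partial>I11) \<le> (\<integral>s. P s * C \<partial>I11)"
    by (rule integral_mono[OF iD]) (use iP b1 in auto)
  also have "\<dots> = (2 * a\<^sup>2 - (\<Sum>k=1..n. (L a k)\<^sup>2)) * C" using intP by simp
  finally show "(\<integral>s. (D s)\<^sup>2 \<partial>I11) \<le> (2 * a\<^sup>2 - (\<Sum>k=1..n. (L a k)\<^sup>2)) * (\<integral>t. (f t)\<^sup>2 \<partial>I11)"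
    unfolding C_def .
qed

lemma odd_squares: "(\<lambda>i. 1 / (2 * real i + 1)\<^sup>2) sums (pi\<^sup>2 / 8)"
proof -
  define g where "g n = 1 / (real n + 1)\<^sup>2" for n :: nat
  have g: "g sums (pi\<^sup>2 / 6)" unfolding g_def using inverse_squares_sums by (simp add: add.commute)
  have "(\<lambda>n. sum g {n * 2 ..< n * 2 + 2}) sums (pi\<^sup>2 / 6)" by (rule sums_group[OF g]) simp
  moreover have "sum g {n * 2 ..< n * 2 + 2} = 1 / (2 * real n + 1)\<^sup>2 + g n / 4" for n
  proof -
    have "sum g {n * 2 ..< n * 2 + 2} = g (2 * n) + g (2 * n + 1)"
      by (simp add: numeral_2_eq_2 mult.commute)
    moreover have "g (2 * n + 1) = g n / 4" unfolding g_def
      by (simp add: field_simps power2_eq_square)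
    moreover have "g (2 * n) = 1 / (2 * real n + 1)\<^sup>2" unfolding g_def by simp
    ultimately show ?thesis by simp
  qed
  ultimately have s1: "(\<lambda>n. 1 / (2 * real n + 1)\<^sup>2 + g n / 4) sums (pi\<^sup>2 / 6)" by simp
  have s2: "(\<lambda>n. g n / 4) sums (pi\<^sup>2 / 6 / 4)" by (rule sums_divide[OF g])
  have "(\<lambda>n. (1 / (2 * real n + 1)\<^sup>2 + g n / 4) - g n / 4) sums (pi\<^sup>2 / 6 - pi\<^sup>2 / 6 / 4)"
    by (rule sums_diff[OF s1 s2])
  then show ?thesis by simp
qed


lemma tail:
  assumes a: "0 < a"
  shows "(\<lambda>n. 2 * a\<^sup>2 - (\<Sum>k=1..n. (L a k)\<^sup>2)) \<longlonglongrightarrow> 0"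
proof -
  have Le: "(L a (Suc i))\<^sup>2 = (16 * a\<^sup>2 / pi\<^sup>2) * (1 / (2 * real i + 1)\<^sup>2)" for i
    using a unfolding L_def om_def by (simp add: power2_eq_square field_simps)
  have "(\<lambda>i. (16 * a\<^sup>2 / pi\<^sup>2) * (1 / (2 * real i + 1)\<^sup>2)) sums ((16 * a\<^sup>2 / pi\<^sup>2) * (pi\<^sup>2 / 8))"
    by (rule sums_mult[OF odd_squares])
  moreover have "(16 * a\<^sup>2 / pi\<^sup>2) * (pi\<^sup>2 / 8) = 2 * a\<^sup>2" by simp
  ultimately have "(\<lambda>i. (L a (Suc i))\<^sup>2) sums (2 * a\<^sup>2)" unfolding Le by simp
  then have "(\<lambda>n. \<Sum>i<n. (L a (Suc i))\<^sup>2) \<longlonglongrightarrow> 2 * a\<^sup>2" unfolding sums_def .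
  moreover have "(\<Sum>k=1..n. (L a k)\<^sup>2) = (\<Sum>i<n. (L a (Suc i))\<^sup>2)" for n
    using sum.atLeast1_atMost_eq[of "\<lambda>k. (L a k)\<^sup>2" n] by simp
  ultimately have "(\<lambda>n. \<Sum>k=1..n. (L a k)\<^sup>2) \<longlonglongrightarrow> 2 * a\<^sup>2" by simp
  then have "(\<lambda>n. 2 * a\<^sup>2 - (\<Sum>k=1..n. (L a k)\<^sup>2)) \<longlonglongrightarrow> 2 * a\<^sup>2 - 2 * a\<^sup>2"
    by (intro tendsto_diff tendsto_const)
  then show ?thesis by simp
qed

lemma TK_L2:
  assumes a: "0 < a" "a \<le> 1" and f: "L2 f"
  shows "L2 (TK a f)"
  using key(1)[OF a f, of 0] by simp

lemma proj:
  assumes a: "0 < a" "a \<le> 1" and f: "L2 f"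
  shows "(\<integral>s. (TK a f s - (\<Sum>k=1..n. (\<integral>t. G a k t * TK a f t \<partial>I11) * G a k s))\<^sup>2 \<partial>I11)
    \<le> (\<integral>s. (TK a f s - (\<Sum>k=1..n. L a k * (\<integral>t. G a k t * f t \<partial>I11) * G a k s))\<^sup>2 \<partial>I11)"
proof -
  define d where "d k = (\<integral>t. G a k t * TK a f t \<partial>I11)" for k
  define c where "c k = L a k * (\<integral>t. G a k t * f t \<partial>I11)" for k
  have h: "L2 (TK a f)" by (rule TK_L2[OF a f])
  have on: "\<And>j k. j \<in> {1..n} \<Longrightarrow> k \<in> {1..n} \<Longrightarrow> (\<integral>t. G a j t * G a k t \<partial>I11) = (if j = k then 1 else 0)"
    using GG(2)[OF a] by simp
  have gl: "\<And>k. k \<in> {1..n} \<Longrightarrow> L2 (G a k)" using GL2[OF a(1)] by blast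
  have E1: "(\<integral>s. (TK a f s - (\<Sum>k\<in>{1..n}. d k * G a k s))\<^sup>2 \<partial>I11)
     = (\<integral>t. (TK a f t)\<^sup>2 \<partial>I11) - 2 * (\<Sum>k\<in>{1..n}. d k * d k) + (\<Sum>k\<in>{1..n}. (d k)\<^sup>2)"
    using expand[of "{1..n}" "TK a f" "G a" d] h gl on unfolding d_def by simp
  have E2: "(\<integral>s. (TK a f s - (\<Sum>k\<in>{1..n}. c k * G a k s))\<^sup>2 \<partial>I11)
     = (\<integral>t. (TK a f t)\<^sup>2 \<partial>I11) - 2 * (\<Sum>k\<in>{1..n}. c k * d k) + (\<Sum>k\<in>{1..n}. (c k)\<^sup>2)"
    using expand[of "{1..n}" "TK a f" "G a" c] h gl on unfolding d_def by simp
  have "0 \<le> (\<Sum>k\<in>{1..n}. (c k - d k)\<^sup>2)" by (simp add: sum_nonneg)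
  also have "(\<Sum>k\<in>{1..n}. (c k - d k)\<^sup>2) = (\<Sum>k\<in>{1..n}. (c k)\<^sup>2) - 2 * (\<Sum>k\<in>{1..n}. c k * d k) + (\<Sum>k\<in>{1..n}. (d k)\<^sup>2)"
  proof -
    have "(\<Sum>k\<in>{1..n}. (c k - d k)\<^sup>2) = (\<Sum>k\<in>{1..n}. (c k)\<^sup>2 - 2 * (c k * d k) + (d k)\<^sup>2)"
      by (rule sum.cong) (auto simp: power2_diff)
    also have "\<dots> = (\<Sum>k\<in>{1..n}. (c k)\<^sup>2) - (\<Sum>k\<in>{1..n}. 2 * (c k * d k)) + (\<Sum>k\<in>{1..n}. (d k)\<^sup>2)"
      by (simp only: sum.distrib sum_subtractf)
    finally show ?thesis by (simp only: sum_distrib_left[symmetric])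
  qed
  finally have "(\<Sum>k\<in>{1..n}. (d k)\<^sup>2) - 2 * (\<Sum>k\<in>{1..n}. d k * d k) \<le> (\<Sum>k\<in>{1..n}. (c k)\<^sup>2) - 2 * (\<Sum>k\<in>{1..n}. c k * d k)"
    by (simp add: power2_eq_square)
  then have "(\<integral>s. (TK a f s - (\<Sum>k\<in>{1..n}. d k * G a k s))\<^sup>2 \<partial>I11) \<le> (\<integral>s. (TK a f s - (\<Sum>k\<in>{1..n}. c k * G a k s))\<^sup>2 \<partial>I11)"
    unfolding E1 E2 by simp
  then show ?thesis unfolding c_def d_def .
qed

theorem mainTheorem3:
  fixes \<alpha> :: real
  assumes "0 < \<alpha>" and "\<alpha> \<le> 1 / sqrt 2"
  shows
    "(\<forall>k\<ge>1. L2 (gk \<alpha> k)) \<and>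
     (\<forall>j\<ge>1. \<forall>k\<ge>1. l2_inner (gk \<alpha> j) (gk \<alpha> k) = (if j = k then 1 else 0)) \<and>
     (\<forall>k\<ge>1. \<exists>f. L2 f \<and> (AE s in I11. TX \<alpha> f s = gk \<alpha> k s)) \<and>
     (\<forall>f. L2 f \<longrightarrow> L2 (TX \<alpha> f) \<and>
        (\<lambda>n. l2_norm (\<lambda>s. TX \<alpha> f s - (\<Sum>k=1..n. l2_inner (gk \<alpha> k) (TX \<alpha> f) * gk \<alpha> k s)))
          \<longlonglongrightarrow> 0) \<and>
     (\<forall>\<epsilon>>0. \<exists>N. \<forall>n\<ge>N. \<forall>f. L2 f \<longrightarrow>
        l2_norm (\<lambda>s. TX \<alpha> f s - (\<Sum>k=1..n. lam \<alpha> k * l2_inner (gk \<alpha> k) f * gk \<alpha> k s))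
          \<le> \<epsilon> * l2_norm f)"
proof -
  define a where "a = sqrt 2 * \<alpha>"
  have a0: "0 < a" unfolding a_def using assms(1) by simp
  have "a \<le> sqrt 2 * (1 / sqrt 2)" unfolding a_def by (rule mult_left_mono[OF assms(2)]) simp
  then have a1: "a \<le> 1" by simp
  note a = a0 a1
  have gk: "gk \<alpha> k = G a k" for k unfolding a_def by (rule gk_G[OF assms(1)])
  have lam: "lam \<alpha> k = L a k" for k unfolding a_def by (rule lam_L[OF assms(1)])
  have TX: "TX \<alpha> f = TK a f" for f by (rule ext) (simp add: TX_K TK_def a_def)
  have nrm: "l2_norm h = sqrt (\<integral>t. (h t)\<^sup>2 \<partial>I11)" for h
    unfolding l2_norm_def l2_inner_def by (simp add: power2_eq_square)
  have T: "(\<lambda>n. 2 * a\<^sup>2 - (\<Sum>k=1..n. (L a k)\<^sup>2)) \<longlonglongrightarrow> 0" by (rule tail[OF a0])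
  have c1: "\<forall>k\<ge>1. L2 (G a k)" using GL2[OF a0] by blast
  have c2: "\<forall>j\<ge>1. \<forall>k\<ge>1. (\<integral>t. G a j t * G a k t \<partial>I11) = (if j = k then 1 else 0)"
    using GG(2)[OF a] by blast
  have c3: "\<exists>f. L2 f \<and> (AE s in I11. TK a f s = G a k s)" if k: "k \<ge> 1" for k
  proof -
    have L0: "L a k \<noteq> 0" unfolding L_def using om_pos[OF a0 k] by simp
    define f where "f t = (1 / L a k) * G a k t" for t
    have "L2 f" unfolding f_def by (rule L2_cmult[OF GL2[OF a0]])
    moreover have "TK a f s = G a k s" for s
    proof -
      have "TK a f s = (\<integral>t. (1 / L a k) * (G a k t * K a s t) \<partial>I11)"
        unfolding TK_def f_def by (simp add: mult.commute mult.left_commute)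
      also have "\<dots> = (1 / L a k) * (L a k * G a k s)" using GK[OF a k] by simp
      finally show ?thesis using L0 by simp
    qed
    ultimately show ?thesis by auto
  qed
  have c45: "L2 (TK a f) \<and>
        (\<lambda>n. sqrt (\<integral>s. (TK a f s - (\<Sum>k=1..n. (\<integral>t. G a k t * TK a f t \<partial>I11) * G a k s))\<^sup>2 \<partial>I11)) \<longlonglongrightarrow> 0"
    if f: "L2 f" for f
  proof
    show "L2 (TK a f)" by (rule TK_L2[OF a f])
    define C where "C = (\<integral>t. (f t)\<^sup>2 \<partial>I11)"
    have ub: "sqrt (\<integral>s. (TK a f s - (\<Sum>k=1..n. (\<integral>t. G a k t * TK a f t \<partial>I11) * G a k s))\<^sup>2 \<partial>I11)
        \<le> sqrt ((2 * a\<^sup>2 - (\<Sum>k=1..n. (L a k)\<^sup>2)) * C)" for n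
      unfolding C_def using order_trans[OF proj[OF a f, of n] key(2)[OF a f, of n]] by simp
    have "(\<lambda>n. sqrt ((2 * a\<^sup>2 - (\<Sum>k=1..n. (L a k)\<^sup>2)) * C)) \<longlonglongrightarrow> sqrt (0 * C)"
      by (intro tendsto_real_sqrt tendsto_mult T tendsto_const)
    then have lim0: "(\<lambda>n. sqrt ((2 * a\<^sup>2 - (\<Sum>k=1..n. (L a k)\<^sup>2)) * C)) \<longlonglongrightarrow> 0" by simp
    show "(\<lambda>n. sqrt (\<integral>s. (TK a f s - (\<Sum>k=1..n. (\<integral>t. G a k t * TK a f t \<partial>I11) * G a k s))\<^sup>2 \<partial>I11)) \<longlonglongrightarrow> 0"
    proof (rule tendsto_sandwich[OF _ _ tendsto_const])
      show "\<forall>\<^sub>F n in sequentially. 0 \<le> sqrt (\<integral>s. (TK a f s - (\<Sum>k=1..n. (\<integral>t. G a k t * TK a f t \<partial>I11) * G a k s))\<^sup>2 \<partial>I11)"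
        by (intro always_eventually allI) simp
      show "\<forall>\<^sub>F n in sequentially. sqrt (\<integral>s. (TK a f s - (\<Sum>k=1..n. (\<integral>t. G a k t * TK a f t \<partial>I11) * G a k s))\<^sup>2 \<partial>I11) \<le> sqrt ((2 * a\<^sup>2 - (\<Sum>k=1..n. (L a k)\<^sup>2)) * C)"
        by (intro always_eventually allI ub)
    qed (rule lim0)
  qed
  have c5: "\<exists>N. \<forall>n\<ge>N. \<forall>f. L2 f \<longrightarrow>
        sqrt (\<integral>s. (TK a f s - (\<Sum>k=1..n. L a k * (\<integral>t. G a k t * f t \<partial>I11) * G a k s))\<^sup>2 \<partial>I11)
          \<le> \<epsilon> * sqrt (\<integral>t. (f t)\<^sup>2 \<partial>I11)" if e: "\<epsilon> > 0" for \<epsilon>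
  proof -
    have "\<epsilon>\<^sup>2 > 0" using e by simp
    from order_tendstoD(2)[OF T this] obtain N where N: "\<And>n. n \<ge> N \<Longrightarrow> 2 * a\<^sup>2 - (\<Sum>k=1..n. (L a k)\<^sup>2) < \<epsilon>\<^sup>2"
      unfolding eventually_sequentially by blast
    show ?thesis
    proof (intro exI allI impI)
      fix n f assume n: "N \<le> n" and f: "L2 f"
      define C where "C = (\<integral>t. (f t)\<^sup>2 \<partial>I11)"
      have C0: "0 \<le> C" unfolding C_def by simp
      have "(\<integral>s. (TK a f s - (\<Sum>k=1..n. L a k * (\<integral>t. G a k t * f t \<partial>I11) * G a k s))\<^sup>2 \<partial>I11)
          \<le> (2 * a\<^sup>2 - (\<Sum>k=1..n. (L a k)\<^sup>2)) * C" unfolding C_def by (rule key(2)[OF a f])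
      also have "\<dots> \<le> \<epsilon>\<^sup>2 * C" using N[OF n] C0 by (intro mult_right_mono) auto
      finally have "sqrt (\<integral>s. (TK a f s - (\<Sum>k=1..n. L a k * (\<integral>t. G a k t * f t \<partial>I11) * G a k s))\<^sup>2 \<partial>I11)
          \<le> sqrt (\<epsilon>\<^sup>2 * C)" by (rule real_sqrt_le_mono)
      also have "\<dots> = \<epsilon> * sqrt C" using e by (simp add: real_sqrt_mult)
      finally show "sqrt (\<integral>s. (TK a f s - (\<Sum>k=1..n. L a k * (\<integral>t. G a k t * f t \<partial>I11) * G a k s))\<^sup>2 \<partial>I11)
          \<le> \<epsilon> * sqrt (\<integral>t. (f t)\<^sup>2 \<partial>I11)" unfolding C_def .
    qed
  qed
  show ?thesis
    unfolding gk lam TX nrm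
    unfolding l2_inner_def
    using c1 c2 c3 c45 c5 by blast
qed

end
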